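(* Let $c\in\,]0,1[$ and $r=1-c$. For every real $t\ge 1$: (i) for all $\lambda\in[0,r]$, $\lambda^{2t}\le \lambda e^{-ct}$; (ii) for all $\lambda\in[r,1]$, $\lambda^{2t}\le e^{(\lambda-1)t}-e^{-ct}+\lambda e^{-ct}$; (iii) for all $\lambda\in[0,1]$, $e^{-2t}\big(e^{2\lambda t}-1\big)\le 2\lambda t e^{-t}+\lambda^{t}$. *)

theory Defs
  imports Complex_Main
begin

end

theory Submission
  imports Defs
begin

lemma part1:
  fixes c t l :: real
  assumes "0 < c" "c < 1" "t \<ge> 1" "0 \<le> l" "l \<le> 1 - c"
  shows "l powr (2 * t) \<le> l * exp (- c * t)"
proof (cases "l = 0")
  case True then show ?thesis by simp
next
  case False
  hence lp: "l > 0" using assms by simp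
  have "ln l \<le> ln (1 - c)" using lp assms by simp
  also have "\<dots> \<le> (1 - c) - 1" using assms by (intro ln_le_minus_one) simp
  finally have h1: "ln l \<le> - c" by simp
  have h0: "ln l \<le> 0" using lp assms by simp
  have "(2*t - 1) * ln l \<le> t * ln l" using h0 assms by (intro mult_right_mono_neg) auto
  also have "\<dots> \<le> t * (-c)" using h1 assms by (intro mult_left_mono) auto
  finally have "2 * t * ln l \<le> ln l + (- c * t)" by (simp add: algebra_simps)
  hence "exp (2 * t * ln l) \<le> exp (ln l + (- c * t))" by simp
  moreover have "exp (ln l + (- c * t)) = l * exp (- c * t)" using lp by (simp only: exp_add) simp
  moreover have "l powr (2 * t) = exp (2 * t * ln l)" using lp by (simp add: powr_def)
  ultimately show ?thesis by (metis diff_conv_add_uminus minus_mult_left)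
qed

lemma part2:
  fixes c t l :: real
  assumes "0 < c" "c < 1" "t \<ge> 1" "1 - c \<le> l" "l \<le> 1"
  shows "l powr (2 * t) \<le> exp ((l - 1) * t) - exp (- c * t) + l * exp (- c * t)"
proof -
  have lp: "l > 0" using assms by simp
  have h0: "ln l \<le> 0" using lp assms by simp
  have h1: "ln l \<le> l - 1" using lp by (intro ln_le_minus_one)
  have "(2*t - 1) * ln l \<le> t * ln l" using h0 assms by (intro mult_right_mono_neg) auto
  also have "\<dots> \<le> t * (l - 1)" using h1 assms by (intro mult_left_mono) auto
  finally have "2 * t * ln l \<le> ln l + (l - 1) * t" by (simp add: algebra_simps)
  hence "exp (2 * t * ln l) \<le> exp (ln l + (l - 1) * t)" by simp
  hence a: "l powr (2 * t) \<le> l * exp ((l - 1) * t)" using lp by (simp add: powr_def exp_add)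
  have "- c * t \<le> (l - 1) * t" using assms by (intro mult_right_mono) auto
  hence e: "exp (- c * t) \<le> exp ((l - 1) * t)" by simp
  have "(1 - l) * exp (- c * t) \<le> (1 - l) * exp ((l - 1) * t)"
    using e assms by (intro mult_left_mono) auto
  thus ?thesis using a by (simp add: algebra_simps)
qed

lemma part3:
  fixes t l :: real
  assumes "t \<ge> 1" "0 \<le> l" "l \<le> 1"
  shows "exp (- 2 * t) * (exp (2 * l * t) - 1) \<le> 2 * l * t * exp (- t) + l powr t"
proof (cases "l \<le> 1/2")
  case True
  define x where "x = 2 * l * t"
  have "1 - x \<le> exp (- x)" using exp_ge_add_one_self[of "-x"] by simp
  hence "exp x * (1 - x) \<le> exp x * exp (- x)" by (intro mult_left_mono) auto
  hence "exp x - 1 \<le> x * exp x" by (simp add: exp_minus_inverse algebra_simps)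
  hence "exp (- 2 * t) * (exp x - 1) \<le> exp (- 2 * t) * (x * exp x)"
    by (intro mult_left_mono) auto
  also have "\<dots> = x * exp ((2 * l - 2) * t)"
    by (simp add: x_def exp_add[symmetric] algebra_simps)
  also have "\<dots> \<le> x * exp (- t)"
  proof -
    have "(2 * l - 2) * t \<le> -1 * t" using True assms by (intro mult_right_mono) auto
    hence "exp ((2 * l - 2) * t) \<le> exp (- t)" by simp
    thus ?thesis using assms by (intro mult_left_mono) (auto simp: x_def)
  qed
  finally have "exp (- 2 * t) * (exp (2 * l * t) - 1) \<le> 2 * l * t * exp (- t)" by (simp add: x_def)
  thus ?thesis using powr_ge_zero[of l t] by linarith
next
  case False
  hence lp: "l > 0" "l \<ge> 1/2" by auto
  have L: "1 - 1 / l \<le> ln l" using lp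
    by (smt (verit) divide_le_0_1_iff ln_divide_pos ln_ge_zero_iff ln_le_minus_one)
  have "(l - 1) * (1 - 2 * l) \<ge> 0" using lp assms by (intro mult_nonpos_nonpos) auto
  hence "2 * (l - 1) \<le> 1 - 1 / l" using lp by (simp add: field_simps algebra_simps)
  hence "2 * (l - 1) \<le> ln l" using L by simp
  hence "(2 * (l - 1)) * t \<le> ln l * t" using assms by (intro mult_right_mono) auto
  hence "(2 * l - 2) * t \<le> t * ln l" by (simp add: algebra_simps)
  hence "exp ((2 * l - 2) * t) \<le> l powr t" using lp by (simp add: powr_def)
  moreover have "exp (- 2 * t) * (exp (2 * l * t) - 1) \<le> exp ((2 * l - 2) * t)"
    by (simp add: right_diff_distrib exp_add[symmetric] algebra_simps)
  moreover have "0 \<le> 2 * l * t * exp (- t)" using lp assms by simp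
  ultimately show ?thesis by linarith
qed

theorem lemma2:
  fixes c r t :: real
  assumes "0 < c" and "c < 1" and "r = 1 - c" and "t \<ge> 1"
  shows "(\<forall>l::real. 0 \<le> l \<and> l \<le> r \<longrightarrow>
            l powr (2 * t) \<le> l * exp (- c * t))
       \<and> (\<forall>l::real. r \<le> l \<and> l \<le> 1 \<longrightarrow>
            l powr (2 * t) \<le> exp ((l - 1) * t) - exp (- c * t) + l * exp (- c * t))
       \<and> (\<forall>l::real. 0 \<le> l \<and> l \<le> 1 \<longrightarrow>
            exp (- 2 * t) * (exp (2 * l * t) - 1) \<le> 2 * l * t * exp (- t) + l powr t)"
  using part1[OF assms(1,2,4)] part2[OF assms(1,2,4)] part3[OF assms(4)] assms(3) by auto

end
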